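(* Let $L$ be a finite-dimensional semisimple Leibniz algebra over $\mathbb{C}$ with a decomposition $L=(\oplus_{i=1}^m\mathfrak{g}_i)\ltimes(\oplus_{k=1}^n I_k)$, where $\mathfrak{g}_1,\dots,\mathfrak{g}_m$ are simple Lie subalgebras whose direct sum is a subalgebra complementary to $I$, and $I=\oplus_{k=1}^n I_k$ is a decomposition into simple $(\oplus_{i=1}^m\mathfrak{g}_i)$-submodules. Let $\Gamma$ be the graph with vertex set $\{\mathfrak{g}_1,\dots,\mathfrak{g}_m\}$ in which distinct $\mathfrak{g}_i,\mathfrak{g}_j$ are joined by an edge if and only if there exists $k$ with $[I_k,\mathfrak{g}_i]=I_k=[I_k,\mathfrak{g}_j]$. Let $\mathrm{B}\Gamma$ be the bipartite graph with vertex classes $\{I_1,\dots,I_n\}$ and $\{\mathfrak{g}_1,\dots,\mathfrak{g}_m\}$, where $I_k$ and $\mathfrak{g}_i$ are joined if and only if $[I_k,\mathfrak{g}_i]=I_k$. Then the following are equivalent: (i) $[I_k,\oplus_{i=1}^m\mathfrak{g}_i]=I_k$ for all $k=1,\dots,n$, and $\Gamma$ is connected; (ii) $\mathrm{B}\Gamma$ is connected.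
   Context: A Leibniz algebra is a vector space $L$ with a bilinear bracket satisfying $[[x,y],z]=[[x,z],y]+[x,[y,z]]$. The subspace $I=\mathrm{Span}\langle [x,x]\mid x\in L\rangle$ is an ideal with $[L,I]=0$, $\mathfrak{g}_L=L/I$ is a Lie algebra, and $L$ is semisimple if $\mathfrak{g}_L$ is semisimple; then $L$ has a subalgebra isomorphic to $\mathfrak{g}_L$ complementary to $I$, and $I$ is a module over it via $i.g=[i,g]$. For each $k,i$ one has $[I_k,\mathfrak{g}_i]\in\{I_k,\{0\}\}$. *)

theory Defs
  imports Complex_Main
begin

definition leibniz_algebra :: "(complex \<Rightarrow> 'v::ab_group_add \<Rightarrow> 'v) \<Rightarrow> ('v \<Rightarrow> 'v \<Rightarrow> 'v) \<Rightarrow> bool" where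
  "leibniz_algebra sc br \<longleftrightarrow>
     vector_space sc \<and>
     (\<forall>x. Vector_Spaces.linear sc sc (br x)) \<and>
     (\<forall>y. Vector_Spaces.linear sc sc (\<lambda>x. br x y)) \<and>
     (\<forall>x y z. br (br x y) z = br (br x z) y + br x (br y z))"

definition fin_dim :: "(complex \<Rightarrow> 'v::ab_group_add \<Rightarrow> 'v) \<Rightarrow> bool" where
  "fin_dim sc \<longleftrightarrow> (\<exists>B. finite B \<and> module.span sc B = UNIV)"

definition brs :: "(complex \<Rightarrow> 'v::ab_group_add \<Rightarrow> 'v) \<Rightarrow> ('v \<Rightarrow> 'v \<Rightarrow> 'v) \<Rightarrow> 'v set \<Rightarrow> 'v set \<Rightarrow> 'v set" where
  "brs sc br A B = module.span sc {br a b | a b. a \<in> A \<and> b \<in> B}"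

definition leib_I :: "(complex \<Rightarrow> 'v::ab_group_add \<Rightarrow> 'v) \<Rightarrow> ('v \<Rightarrow> 'v \<Rightarrow> 'v) \<Rightarrow> 'v set" where
  "leib_I sc br = module.span sc {br x x | x. True}"

definition setsum :: "'v::ab_group_add set \<Rightarrow> 'v set \<Rightarrow> 'v set" where
  "setsum A B = {a + b | a b. a \<in> A \<and> b \<in> B}"

definition two_sided_ideal :: "(complex \<Rightarrow> 'v::ab_group_add \<Rightarrow> 'v) \<Rightarrow> ('v \<Rightarrow> 'v \<Rightarrow> 'v) \<Rightarrow> 'v set \<Rightarrow> bool" where
  "two_sided_ideal sc br J \<longleftrightarrow> module.subspace sc J \<and> (\<forall>x\<in>J. \<forall>y. br x y \<in> J \<and> br y x \<in> J)"

text \<open>Derived series of J/I, lifted to L: D_0 = J, D_(k+1) = [D_k, D_k] + I.\<close>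
primrec derived_mod :: "(complex \<Rightarrow> 'v::ab_group_add \<Rightarrow> 'v) \<Rightarrow> ('v \<Rightarrow> 'v \<Rightarrow> 'v) \<Rightarrow> 'v set \<Rightarrow> 'v set \<Rightarrow> nat \<Rightarrow> 'v set" where
  "derived_mod sc br I J 0 = J"
| "derived_mod sc br I J (Suc k) = setsum (brs sc br (derived_mod sc br I J k) (derived_mod sc br I J k)) I"

text \<open>L is semisimple iff the Lie algebra L/I is semisimple, i.e. has no nonzero solvable
  ideal. Ideals of L/I correspond to ideals J of L containing I; J/I is solvable iff
  some term of its derived series is contained in I.\<close>
definition leibniz_semisimple :: "(complex \<Rightarrow> 'v::ab_group_add \<Rightarrow> 'v) \<Rightarrow> ('v \<Rightarrow> 'v \<Rightarrow> 'v) \<Rightarrow> bool" where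
  "leibniz_semisimple sc br \<longleftrightarrow>
     (\<forall>J. two_sided_ideal sc br J \<and> leib_I sc br \<subseteq> J \<and>
          (\<exists>k. derived_mod sc br (leib_I sc br) J k \<subseteq> leib_I sc br) \<longrightarrow> J = leib_I sc br)"

definition simple_lie_subalgebra :: "(complex \<Rightarrow> 'v::ab_group_add \<Rightarrow> 'v) \<Rightarrow> ('v \<Rightarrow> 'v \<Rightarrow> 'v) \<Rightarrow> 'v set \<Rightarrow> bool" where
  "simple_lie_subalgebra sc br g \<longleftrightarrow>
     module.subspace sc g \<and> (\<forall>x\<in>g. \<forall>y\<in>g. br x y \<in> g) \<and> (\<forall>x\<in>g. br x x = 0) \<and>
     brs sc br g g \<noteq> {0} \<and>
     (\<forall>J. module.subspace sc J \<and> J \<subseteq> g \<and> (\<forall>x\<in>J. \<forall>y\<in>g. br x y \<in> J) \<longrightarrow> J = {0} \<or> J = g)"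

definition simple_submodule :: "(complex \<Rightarrow> 'v::ab_group_add \<Rightarrow> 'v) \<Rightarrow> ('v \<Rightarrow> 'v \<Rightarrow> 'v) \<Rightarrow> 'v set \<Rightarrow> 'v set \<Rightarrow> bool" where
  "simple_submodule sc br S M \<longleftrightarrow>
     module.subspace sc M \<and> M \<noteq> {0} \<and> (\<forall>x\<in>M. \<forall>s\<in>S. br x s \<in> M) \<and>
     (\<forall>N. module.subspace sc N \<and> N \<subseteq> M \<and> (\<forall>x\<in>N. \<forall>s\<in>S. br x s \<in> N) \<longrightarrow> N = {0} \<or> N = M)"

definition family_sum :: "'i set \<Rightarrow> ('i \<Rightarrow> 'v::ab_group_add set) \<Rightarrow> 'v set" where
  "family_sum A V = {\<Sum>i\<in>A. f i | f. \<forall>i\<in>A. f i \<in> V i}"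

definition family_independent :: "'i set \<Rightarrow> ('i \<Rightarrow> 'v::ab_group_add set) \<Rightarrow> bool" where
  "family_independent A V \<longleftrightarrow>
     (\<forall>f. (\<forall>i\<in>A. f i \<in> V i) \<and> (\<Sum>i\<in>A. f i) = 0 \<longrightarrow> (\<forall>i\<in>A. f i = 0))"

definition graph_connected :: "'a set \<Rightarrow> ('a \<Rightarrow> 'a \<Rightarrow> bool) \<Rightarrow> bool" where
  "graph_connected V E \<longleftrightarrow>
     (\<forall>x\<in>V. \<forall>y\<in>V. (x, y) \<in> {(a, b). a \<in> V \<and> b \<in> V \<and> E a b}\<^sup>*)"

end

theory Submission imports Defs begin

locale LA = vector_space sc for sc :: "complex \<Rightarrow> 'v::ab_group_add \<Rightarrow> 'v" +
  fixes br :: "'v \<Rightarrow> 'v \<Rightarrow> 'v"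
  assumes la: "leibniz_algebra sc br"
begin

lemma brR_add: "br x (a + b) = br x a + br x b"
  using la unfolding leibniz_algebra_def Vector_Spaces.linear_iff by blast
lemma brL_add: "br (a + b) x = br a x + br b x"
  using la unfolding leibniz_algebra_def Vector_Spaces.linear_iff by blast
lemma brL_scale: "br (sc c a) x = sc c (br a x)"
  using la unfolding leibniz_algebra_def Vector_Spaces.linear_iff by blast
lemma leib_id: "br (br x y) z = br (br x z) y + br x (br y z)"
  using la unfolding leibniz_algebra_def by blast
lemma brR_0[simp]: "br x 0 = 0"
  using brR_add[of x 0 0] by simp
lemma brL_0[simp]: "br 0 x = 0"
  using brL_add[of 0 0 x] by simp
lemma brR_sum: "br x (sum f A) = (\<Sum>i\<in>A. br x (f i))"
  by (induct A rule: infinite_finite_induct) (auto simp: brR_add)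

lemma brs_sub: "subspace M \<Longrightarrow> (\<And>x s. x \<in> A \<Longrightarrow> s \<in> B \<Longrightarrow> br x s \<in> M) \<Longrightarrow> brs sc br A B \<subseteq> M"
  unfolding brs_def by (rule span_minimal) auto

lemma brs_mono2: "B \<subseteq> B' \<Longrightarrow> brs sc br A B \<subseteq> brs sc br A B'"
  unfolding brs_def by (rule span_mono) auto

lemma brs_gen: "x \<in> A \<Longrightarrow> s \<in> B \<Longrightarrow> br x s \<in> brs sc br A B"
  unfolding brs_def by (rule span_superset[THEN subsetD]) auto

lemma span_right_closed:
  assumes v: "v \<in> span X" and N: "subspace N" and gen: "\<And>x. x \<in> X \<Longrightarrow> br x s \<in> N"
  shows "br v s \<in> N"
  using v
proof (induct rule: span_induct_alt)
  case base then show ?case using N subspace_0 by simp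
next
  case (step c x y)
  then show ?case using N gen by (simp add: brL_add brL_scale subspace_add subspace_scale)
qed

lemma right_ann: "br x (br y y) = 0"
  using leib_id[of x y y] by simp

lemma right_ann_I: "v \<in> leib_I sc br \<Longrightarrow> br x v = 0"
  unfolding leib_I_def
proof (induct rule: span_induct_alt)
  case base then show ?case by simp
next
  case (step c z y)
  then obtain w where "z = br w w" by auto
  moreover have "br x (sc c (br w w)) = sc c (br x (br w w))"
    using la unfolding leibniz_algebra_def Vector_Spaces.linear_iff by blast
  ultimately show ?case using step right_ann by (simp add: brR_add)
qed

lemma fsum_mem:
  assumes "i \<in> A" "finite A" "\<And>j. j \<in> A \<Longrightarrow> subspace (V j)" "x \<in> V i"
  shows "x \<in> family_sum A V"
proof -
  let ?f = "\<lambda>j. if j = i then x else 0"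
  have "(\<Sum>j\<in>A. ?f j) = x" using assms(1,2) by (simp add: sum.delta)
  moreover have "\<forall>j\<in>A. ?f j \<in> V j" using assms subspace_0 by auto
  ultimately show ?thesis unfolding family_sum_def
    by (intro CollectI exI[of _ ?f]) auto
qed

lemma sub_brs_self:
  assumes "simple_submodule sc br S M"
  shows "brs sc br M S \<subseteq> M"
  using assms unfolding simple_submodule_def by (intro brs_sub) auto

lemma dichot:
  fixes m :: nat
  assumes gs: "\<And>i. i \<in> {1..m} \<Longrightarrow> simple_lie_subalgebra sc br (g i)"
    and gc: "\<And>i j. i \<in> {1..m} \<Longrightarrow> j \<in> {1..m} \<Longrightarrow> i \<noteq> j \<Longrightarrow> brs sc br (g i) (g j) = {0}"
    and M: "simple_submodule sc br (family_sum {1..m} g) M"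
    and i: "i \<in> {1..m}"
  shows "brs sc br M (g i) = M \<or> brs sc br M (g i) = {0}"
proof -
  let ?S = "family_sum {1..m} g"
  let ?N = "brs sc br M (g i)"
  have Msub: "subspace M" and Mcl: "\<And>x s. x \<in> M \<Longrightarrow> s \<in> ?S \<Longrightarrow> br x s \<in> M"
    using M unfolding simple_submodule_def by auto
  have gsub: "\<And>j. j \<in> {1..m} \<Longrightarrow> subspace (g j)"
    using gs unfolding simple_lie_subalgebra_def by auto
  have gcl: "\<And>a b. a \<in> g i \<Longrightarrow> b \<in> g i \<Longrightarrow> br a b \<in> g i"
    using gs[OF i] unfolding simple_lie_subalgebra_def by auto
  have giS: "g i \<subseteq> ?S" by (intro subsetI fsum_mem[of i "{1..m}" g]) (use i gsub in auto)
  have Nsub: "subspace ?N" unfolding brs_def by simp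
  have NM: "?N \<subseteq> M" using Msub Mcl giS by (intro brs_sub) auto
  have ags: "br a s \<in> g i" if a: "a \<in> g i" and s: "s \<in> ?S" for a s
  proof -
    obtain f where f: "\<forall>j\<in>{1..m}. f j \<in> g j" and sf: "s = (\<Sum>j\<in>{1..m}. f j)"
      using s unfolding family_sum_def by blast
    have "br a s = (\<Sum>j\<in>{1..m}. br a (f j))" by (simp add: sf brR_sum)
    also have "\<dots> \<in> g i"
    proof (rule subspace_sum[OF gsub[OF i]])
      fix j assume j: "j \<in> {1..m}"
      show "br a (f j) \<in> g i"
      proof (cases "j = i")
        case True then show ?thesis using gcl a f j by auto
      next
        case False
        have "br a (f j) \<in> brs sc br (g i) (g j)" using a f j by (intro brs_gen) auto
        then have "br a (f j) = 0" using gc[OF i j] False by auto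
        then show ?thesis using subspace_0[OF gsub[OF i]] by simp
      qed
    qed
    finally show ?thesis .
  qed
  have Ncl: "\<forall>v\<in>?N. \<forall>s\<in>?S. br v s \<in> ?N"
  proof (intro ballI)
    fix v s assume v: "v \<in> ?N" and s: "s \<in> ?S"
    show "br v s \<in> ?N"
      using v[unfolded brs_def] Nsub
    proof (rule span_right_closed)
      fix z assume "z \<in> {br a b |a b. a \<in> M \<and> b \<in> g i}"
      then obtain x a where z: "z = br x a" and x: "x \<in> M" and a: "a \<in> g i" by blast
      have "br z s = br (br x s) a + br x (br a s)" unfolding z by (rule leib_id)
      moreover have "br (br x s) a \<in> ?N" using Mcl[OF x s] a by (intro brs_gen)
      moreover have "br x (br a s) \<in> ?N" using x ags[OF a s] by (intro brs_gen)
      ultimately show "br z s \<in> ?N" using Nsub subspace_add by simp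
    qed
  qed
  show ?thesis using M Nsub NM Ncl unfolding simple_submodule_def by blast
qed

lemma exists_nb:
  fixes m :: nat
  assumes gs: "\<And>i. i \<in> {1..m} \<Longrightarrow> simple_lie_subalgebra sc br (g i)"
    and gc: "\<And>i j. i \<in> {1..m} \<Longrightarrow> j \<in> {1..m} \<Longrightarrow> i \<noteq> j \<Longrightarrow> brs sc br (g i) (g j) = {0}"
    and M: "simple_submodule sc br (family_sum {1..m} g) M"
    and full: "brs sc br M (family_sum {1..m} g) = M"
  shows "\<exists>i\<in>{1..m}. brs sc br M (g i) = M"
proof (rule ccontr)
  assume "\<not> ?thesis"
  then have z: "\<And>i. i \<in> {1..m} \<Longrightarrow> brs sc br M (g i) = {0}"
    using dichot[OF gs gc M] by blast
  have "brs sc br M (family_sum {1..m} g) \<subseteq> {0}"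
  proof (rule brs_sub)
    fix x s assume x: "x \<in> M" and s: "s \<in> family_sum {1..m} g"
    obtain f where f: "\<forall>j\<in>{1..m}. f j \<in> g j" and sf: "s = (\<Sum>j\<in>{1..m}. f j)"
      using s unfolding family_sum_def by blast
    have "br x (f j) = 0" if j: "j \<in> {1..m}" for j
      using brs_gen[of x M "f j" "g j"] x f j z[OF j] by auto
    then show "br x s \<in> {0}" by (simp add: sf brR_sum)
  qed simp
  then have "M = {0}" using full M unfolding simple_submodule_def by (auto dest: subspace_0)
  then show False using M unfolding simple_submodule_def by blast
qed

lemma nb_full:
  fixes m :: nat
  assumes gs: "\<And>i. i \<in> {1..m} \<Longrightarrow> simple_lie_subalgebra sc br (g i)"
    and M: "simple_submodule sc br (family_sum {1..m} g) M"
    and i: "i \<in> {1..m}" and e: "brs sc br M (g i) = M"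
  shows "brs sc br M (family_sum {1..m} g) = M"
proof -
  have gsub: "\<And>j. j \<in> {1..m} \<Longrightarrow> subspace (g j)"
    using gs unfolding simple_lie_subalgebra_def by auto
  have giS: "g i \<subseteq> family_sum {1..m} g" by (intro subsetI fsum_mem[of i "{1..m}" g]) (use i gsub in auto)
  show ?thesis using brs_mono2[OF giS, of M] e sub_brs_self[OF M] by auto
qed

end

theorem corollary3p6:
  fixes sc :: "complex \<Rightarrow> 'v::ab_group_add \<Rightarrow> 'v"
    and br :: "'v \<Rightarrow> 'v \<Rightarrow> 'v"
    and g :: "nat \<Rightarrow> 'v set" and Ik :: "nat \<Rightarrow> 'v set"
    and m n :: nat
  assumes leib: "leibniz_algebra sc br"
    and fd: "fin_dim sc"
    and ss: "leibniz_semisimple sc br"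
    and g_simple: "\<And>i. i \<in> {1..m} \<Longrightarrow> simple_lie_subalgebra sc br (g i)"
    and g_indep: "family_independent {1..m} g"
    and g_comm: "\<And>i j. i \<in> {1..m} \<Longrightarrow> j \<in> {1..m} \<Longrightarrow> i \<noteq> j \<Longrightarrow> brs sc br (g i) (g j) = {0}"
    and S_compl: "family_sum {1..m} g \<inter> leib_I sc br = {0}"
    and S_span: "setsum (family_sum {1..m} g) (leib_I sc br) = UNIV"
    and I_simple: "\<And>k. k \<in> {1..n} \<Longrightarrow> simple_submodule sc br (family_sum {1..m} g) (Ik k)"
    and I_indep: "family_independent {1..n} Ik"
    and I_sum: "family_sum {1..n} Ik = leib_I sc br"
  shows "((\<forall>k\<in>{1..n}. brs sc br (Ik k) (family_sum {1..m} g) = Ik k) \<and>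
          graph_connected {1..m}
            (\<lambda>i j. i \<noteq> j \<and> (\<exists>k\<in>{1..n}. brs sc br (Ik k) (g i) = Ik k \<and> brs sc br (Ik k) (g j) = Ik k)))
     \<longleftrightarrow>
         graph_connected (Inl ` {1..n} \<union> Inr ` {1..m})
            (\<lambda>u v. (\<exists>k i. u = Inl k \<and> v = Inr i \<and> brs sc br (Ik k) (g i) = Ik k) \<or>
                   (\<exists>k i. u = Inr i \<and> v = Inl k \<and> brs sc br (Ik k) (g i) = Ik k))"
proof -
  have vs: "vector_space sc" using leib unfolding leibniz_algebra_def by blast
  interpret LA sc br
    by (rule LA.intro[OF vs LA_axioms.intro[OF leib]])
  define S where "S = family_sum {1..m} g"
  define A where "A = (\<lambda>k i. brs sc br (Ik k) (g i) = Ik k)"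
  define EG where "EG = (\<lambda>i j. i \<noteq> j \<and> (\<exists>k\<in>{1..n}. brs sc br (Ik k) (g i) = Ik k \<and> brs sc br (Ik k) (g j) = Ik k))"
  define EB where "EB = (\<lambda>u v. (\<exists>k i. u = Inl k \<and> v = Inr i \<and> brs sc br (Ik k) (g i) = Ik k) \<or>
                   (\<exists>k i. u = Inr i \<and> v = Inl k \<and> brs sc br (Ik k) (g i) = Ik k))"
  define VB where "VB = Inl ` {1..n} \<union> Inr ` {1..m}"
  define RG where "RG = {(a, b). a \<in> {1..m} \<and> b \<in> {1..m} \<and> EG a b}"
  define RB where "RB = {(a, b). a \<in> VB \<and> b \<in> VB \<and> EB a b}"
  have EG': "EG i j \<longleftrightarrow> i \<noteq> j \<and> (\<exists>k\<in>{1..n}. A k i \<and> A k j)" for i j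
    unfolding EG_def A_def by simp
  have EB': "EB u v \<longleftrightarrow> (\<exists>k i. u = Inl k \<and> v = Inr i \<and> A k i) \<or> (\<exists>k i. u = Inr i \<and> v = Inl k \<and> A k i)" for u v
    unfolding EB_def A_def by simp
  have gcG: "graph_connected {1..m} EG \<longleftrightarrow> (\<forall>i\<in>{1..m}. \<forall>j\<in>{1..m}. (i, j) \<in> RG\<^sup>*)"
    unfolding graph_connected_def RG_def by simp
  have gcB: "graph_connected VB EB \<longleftrightarrow> (\<forall>u\<in>VB. \<forall>v\<in>VB. (u, v) \<in> RB\<^sup>*)"
    unfolding graph_connected_def RB_def by simp
  have goal: "((\<forall>k\<in>{1..n}. brs sc br (Ik k) S = Ik k) \<and> graph_connected {1..m} EG)
     \<longleftrightarrow> graph_connected VB EB"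
  proof
    assume H: "(\<forall>k\<in>{1..n}. brs sc br (Ik k) S = Ik k) \<and> graph_connected {1..m} EG"
    have nb: "\<exists>i\<in>{1..m}. A k i" if k: "k \<in> {1..n}" for k
      using exists_nb[OF g_simple g_comm I_simple[OF k]] H k unfolding A_def S_def by auto
    have lift: "(Inr i, Inr j) \<in> RB\<^sup>*" if "(i, j) \<in> RG\<^sup>*" for i j
      using that
    proof (induct rule: rtrancl_induct)
      case base then show ?case by simp
    next
      case (step j j')
      then obtain k where k: "k \<in> {1..n}" "A k j" "A k j'" and jj: "j \<in> {1..m}" "j' \<in> {1..m}"
        unfolding RG_def EG' by auto
      have "(Inr j, Inl k) \<in> RB" "(Inl k, Inr j') \<in> RB"
        using k jj unfolding RB_def VB_def EB' by auto
      then show ?case using step(3) by (meson rtrancl_into_rtrancl)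
    qed
    have toR: "\<exists>i\<in>{1..m}. (u, Inr i) \<in> RB\<^sup>* \<and> (Inr i, u) \<in> RB\<^sup>*" if u: "u \<in> VB" for u
    proof (cases "u \<in> Inr ` {1..m}")
      case True then show ?thesis by auto
    next
      case False
      then obtain k where k: "k \<in> {1..n}" "u = Inl k" using u unfolding VB_def by auto
      then obtain i where i: "i \<in> {1..m}" "A k i" using nb by blast
      have "(u, Inr i) \<in> RB" "(Inr i, u) \<in> RB"
        using k i unfolding RB_def VB_def EB' by auto
      then show ?thesis using i by blast
    qed
    show "graph_connected VB EB" unfolding gcB
    proof (intro ballI)
      fix u v assume "u \<in> VB" "v \<in> VB"
      then obtain i j where "i \<in> {1..m}" "j \<in> {1..m}" "(u, Inr i) \<in> RB\<^sup>*" "(Inr j, v) \<in> RB\<^sup>*"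
        using toR by blast
      moreover have "(Inr i, Inr j) \<in> RB\<^sup>*" using lift H calculation(1,2) unfolding gcG by blast
      ultimately show "(u, v) \<in> RB\<^sup>*" by (meson rtrancl_trans)
    qed
  next
    assume HB: "graph_connected VB EB"
    have proj: "\<forall>i. u = Inr i \<longrightarrow> (case v of Inr j \<Rightarrow> (i, j) \<in> RG\<^sup>* | Inl k \<Rightarrow> (\<exists>j\<in>{1..m}. (i, j) \<in> RG\<^sup>* \<and> A k j))"
      if "(u, v) \<in> RB\<^sup>*" "u \<in> VB" for u v
      using that(1)
    proof (induct rule: rtrancl_induct)
      case base then show ?case using that(2) by (auto split: sum.split)
    next
      case (step v w)
      show ?case
      proof (intro allI impI)
        fix i assume ui: "u = Inr i"
        from step(2) have vw: "v \<in> VB" "w \<in> VB" "EB v w" unfolding RB_def by auto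
        show "case w of Inr j \<Rightarrow> (i, j) \<in> RG\<^sup>* | Inl k \<Rightarrow> (\<exists>j\<in>{1..m}. (i, j) \<in> RG\<^sup>* \<and> A k j)"
        proof (cases v)
          case (Inl k)
          then obtain j' where w: "w = Inr j'" "A k j'" using vw(3) unfolding EB' by auto
          have k: "k \<in> {1..n}" and j': "j' \<in> {1..m}" using vw Inl w unfolding VB_def by auto
          obtain j where j: "j \<in> {1..m}" "(i, j) \<in> RG\<^sup>*" "A k j" using step(3) ui Inl by auto
          show ?thesis
          proof (cases "j = j'")
            case True then show ?thesis using w j by simp
          next
            case False
            then have "(j, j') \<in> RG" unfolding RG_def EG' using j j' k w by auto
            then show ?thesis using w j by (simp add: rtrancl_into_rtrancl)
          qed
        next
          case (Inr j)
          then obtain k where w: "w = Inl k" "A k j" using vw(3) unfolding EB' by auto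
          have "j \<in> {1..m}" using vw Inr unfolding VB_def by auto
          then show ?thesis using step(3) ui Inr w by auto
        qed
      qed
    qed
    have part2: "graph_connected {1..m} EG" unfolding gcG
    proof (intro ballI)
      fix i j assume "i \<in> {1..m}" "j \<in> {1..m}"
      then have ij: "Inr i \<in> VB" "Inr j \<in> VB" unfolding VB_def by auto
      then have "(Inr i, Inr j) \<in> RB\<^sup>*" "Inr i \<in> VB" using HB[unfolded gcB] by auto
      from proj[OF this] show "(i, j) \<in> RG\<^sup>*" by simp
    qed
    have part1: "brs sc br (Ik k) S = Ik k" if k: "k \<in> {1..n}" for k
    proof (cases "m = 0")
      case True
      have S0: "S = {0}" unfolding S_def family_sum_def True by simp
      have IU: "leib_I sc br = UNIV" using S_span unfolding S_def[symmetric] S0 setsum_def by auto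
      have "br x x = 0" for x using right_ann_I[of x x] IU by simp
      then have "leib_I sc br = {0}" unfolding leib_I_def by simp
      then have "UNIV = {0::'v}" using IU by simp
      moreover have "Ik k \<noteq> {0}" "0 \<in> Ik k" using I_simple[OF k] unfolding simple_submodule_def
        by (auto dest: subspace_0)
      ultimately have False by (metis UNIV_I singletonD subsetI subset_singletonD empty_iff)
      then show ?thesis by blast
    next
      case False
      then have m1: "Inr 1 \<in> VB" unfolding VB_def by auto
      have "Inl k \<in> VB" using k unfolding VB_def by auto
      then have "(Inl k, Inr 1) \<in> RB\<^sup>*" using HB m1 unfolding gcB by blast
      then obtain y where "(Inl k, y) \<in> RB"
        by (cases rule: converse_rtranclE) auto
      then obtain i where i: "i \<in> {1..m}" "A k i" unfolding RB_def EB' VB_def by auto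
      show ?thesis using nb_full[OF g_simple I_simple[OF k] i(1)] i(2) unfolding A_def S_def by simp
    qed
    show "(\<forall>k\<in>{1..n}. brs sc br (Ik k) S = Ik k) \<and> graph_connected {1..m} EG"
      using part1 part2 by blast
  qed
  show ?thesis using goal unfolding S_def EG_def EB_def VB_def .
qed

end
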